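(* Let $a,b,\alpha,\beta$ be variables and let $n\ge 1$ be a natural number. There exist polynomials in $a,b,\alpha,\beta$ with integer coefficients, denoted $\Psi\left(\begin{array}{cc|c} a & b & n \\ \alpha & \beta & r \end{array}\right)$ for $0\le r\le \lfloor n/2\rfloor$ and $\Phi\left(\begin{array}{cc|c} a & b & n \\ \alpha & \beta & r \end{array}\right)$ for $0\le r\le \lfloor (n-1)/2\rfloor$, depending only on $a,b,\alpha,\beta,n,r$, such that the following polynomial identities in $x,y$ hold: \[ (\beta a-\alpha b)^{\lfloor n/2\rfloor}\frac{x^n+y^n}{(x+y)^{\delta(n)}}=\sum_{r=0}^{\lfloor n/2\rfloor}\Psi\left(\begin{array}{cc|c} a & b & n \\ \alpha & \beta & r \end{array}\right)(\alpha x^2+\beta xy+\alpha y^2)^{\lfloor n/2\rfloor-r}(ax^2+bxy+ay^2)^r, \] \[ (\beta a-\alpha b)^{\lfloor (n-1)/2\rfloor}\frac{x^n-y^n}{(x-y)(x+y)^{\delta(n-1)}}=\sum_{r=0}^{\lfloor (n-1)/2\rfloor}\Phi\left(\begin{array}{cc|c} a & b & n \\ \alpha & \beta & r \end{array}\right)(\alpha x^2+\beta xy+\alpha y^2)^{\lfloor (n-1)/2\rfloor-r}(ax^2+bxy+ay^2)^r. \]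
   Context: $\delta(m)=1$ if $m$ is odd and $\delta(m)=0$ if $m$ is even; $\lfloor m/2\rfloor$ is the largest integer $\le m/2$. Note $\frac{x^n+y^n}{(x+y)^{\delta(n)}}$ and $\frac{x^n-y^n}{(x-y)(x+y)^{\delta(n-1)}}$ are polynomials in $x,y$. *)

theory Defs
  imports "HOL-Computational_Algebra.Polynomial"
begin

text \<open>Polynomials in a, b, alpha, beta with integer coefficients are represented as
  nested univariate polynomials Z[beta][alpha][b][a]; eval4 evaluates such a polynomial.\<close>
definition eval4 :: "int poly poly poly poly \<Rightarrow> int \<Rightarrow> int \<Rightarrow> int \<Rightarrow> int \<Rightarrow> int" where
  "eval4 P a b \<alpha> \<beta> =
     poly (map_poly (\<lambda>q. poly (map_poly (\<lambda>r. poly (map_poly (\<lambda>s. poly s \<beta>) r) \<alpha>) q) b) P) a"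

definition delta :: "nat \<Rightarrow> nat" where
  "delta m = (if odd m then 1 else 0)"

text \<open>The polynomial (x^n + y^n) / (x+y)^delta(n), written out explicitly.\<close>
definition plus_quot :: "nat \<Rightarrow> int \<Rightarrow> int \<Rightarrow> int" where
  "plus_quot n x y =
     (if odd n then (\<Sum>k<n. (-1)^k * x^(n-1-k) * y^k) else x^n + y^n)"

text \<open>The polynomial (x^n - y^n) / ((x-y)(x+y)^delta(n-1)), written out explicitly (n \<ge> 1).\<close>
definition minus_quot :: "nat \<Rightarrow> int \<Rightarrow> int \<Rightarrow> int" where
  "minus_quot n x y =
     (if even n then (\<Sum>k<n div 2. x^(n-2-2*k) * y^(2*k)) else (\<Sum>k<n. x^(n-1-k) * y^k))"


end

theory Submission
  imports Defs
begin

definition ishom :: "('a::comm_ring_1 \<Rightarrow> 'b::comm_ring_1) \<Rightarrow> bool" where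
  "ishom h \<longleftrightarrow> h 0 = 0 \<and> (\<forall>u v. h (u+v) = h u + h v) \<and> (\<forall>u v. h (u*v) = h u * h v)"

lemma ishom_lift:
  assumes "ishom h"
  shows "ishom (\<lambda>p. poly (map_poly h p) x)"
proof -
  have h0: "h 0 = 0" and ha: "\<And>u v. h (u+v) = h u + h v" and hm: "\<And>u v. h (u*v) = h u * h v"
    using assms unfolding ishom_def by auto
  have madd: "map_poly h (p+q) = map_poly h p + map_poly h q" for p q
    by (intro poly_eqI) (simp add: coeff_map_poly h0 ha)
  have padd: "poly (map_poly h (p+q)) x = poly (map_poly h p) x + poly (map_poly h q) x" for p q
    by (simp add: madd)
  have psm: "poly (map_poly h (smult c q)) x = h c * poly (map_poly h q) x" for c q
    by (simp add: map_poly_smult h0 hm)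
  have pmul: "poly (map_poly h (p*q)) x = poly (map_poly h p) x * poly (map_poly h q) x" for p q
  proof (induction p rule: pCons_induct)
    case 0
    then show ?case by simp
  next
    case (pCons c p)
    have "poly (map_poly h (pCons c p * q)) x = poly (map_poly h (smult c q + pCons 0 (p*q))) x"
      by simp
    also have "\<dots> = h c * poly (map_poly h q) x + x * poly (map_poly h (p*q)) x"
      by (simp add: padd psm map_poly_pCons h0)
    also have "\<dots> = poly (map_poly h (pCons c p)) x * poly (map_poly h q) x"
      using pCons.IH by (simp add: map_poly_pCons h0 algebra_simps)
    finally show ?case .
  qed
  show ?thesis unfolding ishom_def using padd pmul by simp
qed

lemma ishom_eval4: "ishom (\<lambda>P. eval4 P a b \<alpha> \<beta>)"
proof -
  have 1: "ishom (\<lambda>s::int poly. poly s \<beta>)" unfolding ishom_def by simp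
  have 2: "ishom (\<lambda>r. poly (map_poly (\<lambda>s. poly s \<beta>) r) \<alpha>)" by (rule ishom_lift[OF 1])
  have 3: "ishom (\<lambda>q. poly (map_poly (\<lambda>r. poly (map_poly (\<lambda>s. poly s \<beta>) r) \<alpha>) q) b)"
    by (rule ishom_lift[OF 2])
  show ?thesis unfolding eval4_def by (rule ishom_lift[OF 3])
qed

lemma eval4_add: "eval4 (p+q) a b \<alpha> \<beta> = eval4 p a b \<alpha> \<beta> + eval4 q a b \<alpha> \<beta>"
  and eval4_mult: "eval4 (p*q) a b \<alpha> \<beta> = eval4 p a b \<alpha> \<beta> * eval4 q a b \<alpha> \<beta>"
  and eval4_0: "eval4 0 a b \<alpha> \<beta> = 0"
  using ishom_eval4[of a b \<alpha> \<beta>] unfolding ishom_def by auto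

lemma eval4_uminus: "eval4 (-p) a b \<alpha> \<beta> = - eval4 p a b \<alpha> \<beta>"
proof -
  have "eval4 (-p + p) a b \<alpha> \<beta> = 0" by (simp add: eval4_0)
  then show ?thesis unfolding eval4_add by simp
qed

lemma eval4_const: "eval4 [:[:[:[:c:]:]:]:] a b \<alpha> \<beta> = c"
  and eval4_a: "eval4 [:0,1:] a b \<alpha> \<beta> = a"
  and eval4_b: "eval4 [:[:0,1:]:] a b \<alpha> \<beta> = b"
  and eval4_al: "eval4 [:[:[:0,1:]:]:] a b \<alpha> \<beta> = \<alpha>"
  and eval4_be: "eval4 [:[:[:[:0,1:]:]:]:] a b \<alpha> \<beta> = \<beta>"
  by (simp_all add: eval4_def map_poly_pCons)

definition HH :: "nat \<Rightarrow> (int\<Rightarrow>int\<Rightarrow>int\<Rightarrow>int\<Rightarrow>int\<Rightarrow>int\<Rightarrow>int) \<Rightarrow> bool" where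
  "HH m F \<longleftrightarrow> (\<exists>\<Psi>::nat \<Rightarrow> int poly poly poly poly. \<forall>a b \<alpha> \<beta> x y. F a b \<alpha> \<beta> x y =
     (\<Sum>r\<le>m. eval4 (\<Psi> r) a b \<alpha> \<beta>
            * (\<alpha>*x^2 + \<beta>*x*y + \<alpha>*y^2)^(m - r) * (a*x^2 + b*x*y + a*y^2)^r))"

lemma HH_cong: "HH m F \<Longrightarrow> (\<And>a b \<alpha> \<beta> x y. F a b \<alpha> \<beta> x y = G a b \<alpha> \<beta> x y) \<Longrightarrow> HH m G"
proof -
  assume h: "HH m F" and e: "\<And>a b \<alpha> \<beta> x y. F a b \<alpha> \<beta> x y = G a b \<alpha> \<beta> x y"
  have "F = G" by (intro ext) (rule e)
  then show ?thesis using h by simp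
qed

lemma HH_add: assumes "HH m F" "HH m G"
  shows "HH m (\<lambda>a b \<alpha> \<beta> x y. F a b \<alpha> \<beta> x y + G a b \<alpha> \<beta> x y)"
proof -
  obtain \<Psi> where P: "\<forall>a b \<alpha> \<beta> x y. F a b \<alpha> \<beta> x y =
     (\<Sum>r\<le>m. eval4 (\<Psi> r) a b \<alpha> \<beta>
            * (\<alpha>*x^2 + \<beta>*x*y + \<alpha>*y^2)^(m - r) * (a*x^2 + b*x*y + a*y^2)^r)"
    using assms(1) unfolding HH_def by blast
  obtain \<Phi> where Q: "\<forall>a b \<alpha> \<beta> x y. G a b \<alpha> \<beta> x y =
     (\<Sum>r\<le>m. eval4 (\<Phi> r) a b \<alpha> \<beta>
            * (\<alpha>*x^2 + \<beta>*x*y + \<alpha>*y^2)^(m - r) * (a*x^2 + b*x*y + a*y^2)^r)"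
    using assms(2) unfolding HH_def by blast
  show ?thesis unfolding HH_def
    by (rule exI[of _ "\<lambda>r. \<Psi> r + \<Phi> r"]) (simp add: P Q eval4_add distrib_right sum.distrib)
qed

lemma HH_U: assumes "HH m F"
  shows "HH (Suc m) (\<lambda>a b \<alpha> \<beta> x y. eval4 p a b \<alpha> \<beta> * (\<alpha>*x^2 + \<beta>*x*y + \<alpha>*y^2) * F a b \<alpha> \<beta> x y)"
proof -
  obtain \<Psi> where P: "\<forall>a b \<alpha> \<beta> x y. F a b \<alpha> \<beta> x y =
     (\<Sum>r\<le>m. eval4 (\<Psi> r) a b \<alpha> \<beta>
            * (\<alpha>*x^2 + \<beta>*x*y + \<alpha>*y^2)^(m - r) * (a*x^2 + b*x*y + a*y^2)^r)"
    using assms(1) unfolding HH_def by blast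
  show ?thesis unfolding HH_def
  proof (rule exI[of _ "\<lambda>r. if r \<le> m then p * \<Psi> r else 0"], intro allI)
    fix a b \<alpha> \<beta> x y :: int
    define U where "U = \<alpha>*x^2 + \<beta>*x*y + \<alpha>*y^2"
    define V where "V = a*x^2 + b*x*y + a*y^2"
    have "eval4 p a b \<alpha> \<beta> * U * F a b \<alpha> \<beta> x y =
       (\<Sum>r\<le>m. eval4 p a b \<alpha> \<beta> * U * (eval4 (\<Psi> r) a b \<alpha> \<beta> * U^(m - r) * V^r))"
      unfolding U_def V_def by (subst P[rule_format]) (simp add: sum_distrib_left)
    also have "\<dots> = (\<Sum>r\<le>m. eval4 (if r \<le> m then p * \<Psi> r else 0) a b \<alpha> \<beta> * U^(Suc m - r) * V^r)"
      by (intro sum.cong refl) (simp add: eval4_mult Suc_diff_le)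
    also have "\<dots> = (\<Sum>r\<le>Suc m. eval4 (if r \<le> m then p * \<Psi> r else 0) a b \<alpha> \<beta> * U^(Suc m - r) * V^r)"
      by (simp add: eval4_0)
    finally show "eval4 p a b \<alpha> \<beta> * (\<alpha>*x^2 + \<beta>*x*y + \<alpha>*y^2) * F a b \<alpha> \<beta> x y =
       (\<Sum>r\<le>Suc m. eval4 (if r \<le> m then p * \<Psi> r else 0) a b \<alpha> \<beta>
          * (\<alpha>*x^2 + \<beta>*x*y + \<alpha>*y^2)^(Suc m - r) * (a*x^2 + b*x*y + a*y^2)^r)"
      unfolding U_def V_def .
  qed
qed

lemma HH_V: assumes "HH m F"
  shows "HH (Suc m) (\<lambda>a b \<alpha> \<beta> x y. eval4 p a b \<alpha> \<beta> * (a*x^2 + b*x*y + a*y^2) * F a b \<alpha> \<beta> x y)"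
proof -
  obtain \<Psi> where P: "\<forall>a b \<alpha> \<beta> x y. F a b \<alpha> \<beta> x y =
     (\<Sum>r\<le>m. eval4 (\<Psi> r) a b \<alpha> \<beta>
            * (\<alpha>*x^2 + \<beta>*x*y + \<alpha>*y^2)^(m - r) * (a*x^2 + b*x*y + a*y^2)^r)"
    using assms(1) unfolding HH_def by blast
  show ?thesis unfolding HH_def
  proof (rule exI[of _ "\<lambda>r. case r of 0 \<Rightarrow> 0 | Suc s \<Rightarrow> p * \<Psi> s"], intro allI)
    fix a b \<alpha> \<beta> x y :: int
    define U where "U = \<alpha>*x^2 + \<beta>*x*y + \<alpha>*y^2"
    define V where "V = a*x^2 + b*x*y + a*y^2"
    have "eval4 p a b \<alpha> \<beta> * V * F a b \<alpha> \<beta> x y =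
       (\<Sum>r\<le>m. eval4 p a b \<alpha> \<beta> * V * (eval4 (\<Psi> r) a b \<alpha> \<beta> * U^(m - r) * V^r))"
      unfolding U_def V_def by (subst P[rule_format]) (simp add: sum_distrib_left)
    also have "\<dots> = (\<Sum>r\<le>m. eval4 (case Suc r of 0 \<Rightarrow> 0 | Suc s \<Rightarrow> p * \<Psi> s) a b \<alpha> \<beta> * U^(Suc m - Suc r) * V^(Suc r))"
      by (intro sum.cong refl) (simp add: eval4_mult)
    also have "\<dots> = (\<Sum>r\<le>Suc m. eval4 (case r of 0 \<Rightarrow> 0 | Suc s \<Rightarrow> p * \<Psi> s) a b \<alpha> \<beta> * U^(Suc m - r) * V^r)"
      by (subst sum.atMost_Suc_shift) (simp add: eval4_0)
    finally show "eval4 p a b \<alpha> \<beta> * (a*x^2 + b*x*y + a*y^2) * F a b \<alpha> \<beta> x y =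
       (\<Sum>r\<le>Suc m. eval4 (case r of 0 \<Rightarrow> 0 | Suc s \<Rightarrow> p * \<Psi> s) a b \<alpha> \<beta>
          * (\<alpha>*x^2 + \<beta>*x*y + \<alpha>*y^2)^(Suc m - r) * (a*x^2 + b*x*y + a*y^2)^r)"
      unfolding U_def V_def .
  qed
qed

lemma HH_lin: assumes "HH m F"
  shows "HH (Suc m) (\<lambda>a b \<alpha> \<beta> x y. (eval4 p a b \<alpha> \<beta> * (\<alpha>*x^2 + \<beta>*x*y + \<alpha>*y^2)
      + eval4 q a b \<alpha> \<beta> * (a*x^2 + b*x*y + a*y^2)) * F a b \<alpha> \<beta> x y)"
proof -
  have "HH (Suc m) (\<lambda>a b \<alpha> \<beta> x y. eval4 p a b \<alpha> \<beta> * (\<alpha>*x^2 + \<beta>*x*y + \<alpha>*y^2) * F a b \<alpha> \<beta> x y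
      + eval4 q a b \<alpha> \<beta> * (a*x^2 + b*x*y + a*y^2) * F a b \<alpha> \<beta> x y)"
    by (rule HH_add[OF HH_U[OF assms] HH_V[OF assms]])
  then show ?thesis by (rule HH_cong) (simp only: distrib_right)
qed

lemma HH_const: "HH 0 (\<lambda>a b \<alpha> \<beta> x y. c)"
  unfolding HH_def by (rule exI[of _ "\<lambda>r. [:[:[:[:c:]:]:]:]"]) (simp add: eval4_const)

lemma key_id:
  fixes a b \<alpha> \<beta> x y f0 f1 :: int
  shows "(\<beta>*a-\<alpha>*b)^Suc (Suc k) * ((x^2+y^2) * f1 - (x*y)^2 * f0) =
    (-b * (\<alpha>*x^2 + \<beta>*x*y + \<alpha>*y^2) + \<beta> * (a*x^2 + b*x*y + a*y^2)) * ((\<beta>*a-\<alpha>*b)^Suc k * f1)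
    + (-a * (\<alpha>*x^2 + \<beta>*x*y + \<alpha>*y^2) + \<alpha> * (a*x^2 + b*x*y + a*y^2))
      * ((a * (\<alpha>*x^2 + \<beta>*x*y + \<alpha>*y^2) + -\<alpha> * (a*x^2 + b*x*y + a*y^2)) * ((\<beta>*a-\<alpha>*b)^k * f0))"
proof -
  define D where "D = \<beta>*a-\<alpha>*b"
  define U where "U = \<alpha>*x^2 + \<beta>*x*y + \<alpha>*y^2"
  define V where "V = a*x^2 + b*x*y + a*y^2"
  have dp: "D*(x^2+y^2) = -b*U + \<beta>*V" unfolding D_def U_def V_def by (simp add: algebra_simps)
  have dq: "D*(x*y) = a*U + -\<alpha>*V" unfolding D_def U_def V_def by (simp add: algebra_simps power2_eq_square)
  have g: "D^Suc (Suc k) * (P*f1 - Q^2*f0) = (D*P)*(D^Suc k*f1) - (D*Q)^2*(D^k*f0)" for P Q :: int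
    by (simp add: power2_eq_square algebra_simps)
  have "D^Suc (Suc k) * ((x^2+y^2) * f1 - (x*y)^2 * f0) =
     (-b*U + \<beta>*V) * (D^Suc k*f1) - (a*U + -\<alpha>*V)^2*(D^k*f0)"
    unfolding g dp dq ..
  also have "\<dots> = (-b*U + \<beta>*V) * (D^Suc k*f1) + (-a*U + \<alpha>*V) * ((a*U + -\<alpha>*V) * (D^k*f0))"
    by (simp add: power2_eq_square algebra_simps)
  finally show ?thesis unfolding D_def U_def V_def .
qed

lemma HH_seq:
  fixes f :: "nat \<Rightarrow> int \<Rightarrow> int \<Rightarrow> int"
  assumes rec: "\<And>k x y. f (Suc (Suc k)) x y = (x^2+y^2) * f (Suc k) x y - (x*y)^2 * f k x y"
    and h0: "HH 0 (\<lambda>a b \<alpha> \<beta> x y. f 0 x y)"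
    and h1: "HH 1 (\<lambda>a b \<alpha> \<beta> x y. (\<beta>*a-\<alpha>*b) * f 1 x y)"
  shows "HH k (\<lambda>a b \<alpha> \<beta> x y. (\<beta>*a-\<alpha>*b)^k * f k x y)"
proof -
  have hk: "HH k (\<lambda>a b \<alpha> \<beta> x y. (\<beta>*a-\<alpha>*b)^k * f k x y)
      \<and> HH (Suc k) (\<lambda>a b \<alpha> \<beta> x y. (\<beta>*a-\<alpha>*b)^Suc k * f (Suc k) x y)"
  proof (induction k)
    case 0
    then show ?case using h0 h1 by simp
  next
    case (Suc k)
    then have A: "HH k (\<lambda>a b \<alpha> \<beta> x y. (\<beta>*a-\<alpha>*b)^k * f k x y)"
      and B: "HH (Suc k) (\<lambda>a b \<alpha> \<beta> x y. (\<beta>*a-\<alpha>*b)^Suc k * f (Suc k) x y)" by auto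
    have C: "HH (Suc (Suc k)) (\<lambda>a b \<alpha> \<beta> x y.
       (eval4 (-[:[:0,1:]:]) a b \<alpha> \<beta> * (\<alpha>*x^2 + \<beta>*x*y + \<alpha>*y^2) + eval4 [:[:[:[:0,1:]:]:]:] a b \<alpha> \<beta> * (a*x^2 + b*x*y + a*y^2))
         * ((\<beta>*a-\<alpha>*b)^Suc k * f (Suc k) x y)
     + (eval4 (-[:0,1:]) a b \<alpha> \<beta> * (\<alpha>*x^2 + \<beta>*x*y + \<alpha>*y^2) + eval4 [:[:[:0,1:]:]:] a b \<alpha> \<beta> * (a*x^2 + b*x*y + a*y^2))
         * ((eval4 [:0,1:] a b \<alpha> \<beta> * (\<alpha>*x^2 + \<beta>*x*y + \<alpha>*y^2) + eval4 (-[:[:[:0,1:]:]:]) a b \<alpha> \<beta> * (a*x^2 + b*x*y + a*y^2))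
         * ((\<beta>*a-\<alpha>*b)^k * f k x y)))"
      by (rule HH_add[OF HH_lin[OF B] HH_lin[OF HH_lin[OF A]]])
    have "HH (Suc (Suc k)) (\<lambda>a b \<alpha> \<beta> x y. (\<beta>*a-\<alpha>*b)^Suc (Suc k) * f (Suc (Suc k)) x y)"
      by (rule HH_cong[OF C]) (simp only: eval4_uminus eval4_a eval4_b eval4_al eval4_be rec key_id)
    then show ?case using B by simp
  qed
  then show ?thesis by simp
qed

definition G :: "nat \<Rightarrow> int \<Rightarrow> int \<Rightarrow> int" where
  "G m x y = (\<Sum>j<m. x^(m-1-j) * y^j)"

lemma G_A: "G (Suc m) x y = x * G m x y + y^m"
proof -
  have "G (Suc m) x y = (\<Sum>j<m. x^(m-j) * y^j) + y^m"
    unfolding G_def by simp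
  also have "(\<Sum>j<m. x^(m-j) * y^j) = x * G m x y"
    unfolding G_def sum_distrib_left
    by (intro sum.cong refl) (simp add: Suc_diff_Suc power_Suc[symmetric] mult.assoc)
  finally show ?thesis .
qed

lemma G_B: "G (Suc m) x y = y * G m x y + x^m"
proof -
  have "G (Suc m) x y = x^m + (\<Sum>j<m. x^(m - Suc j) * y^Suc j)"
    unfolding G_def by (subst sum.lessThan_Suc_shift) simp
  also have "(\<Sum>j<m. x^(m - Suc j) * y^Suc j) = y * G m x y"
    unfolding G_def sum_distrib_left
    by (intro sum.cong refl) (simp add: algebra_simps)
  finally show ?thesis by simp
qed

lemma G_R1: "G (Suc (Suc m)) x y = (x+y) * G (Suc m) x y - x*y * G m x y"
  using G_A[of "Suc m" x y] G_A[of m x y] by (simp add: algebra_simps)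

lemma G_R2: "G (Suc (Suc (Suc (Suc m)))) x y = (x^2+y^2) * G (Suc (Suc m)) x y - (x*y)^2 * G m x y"
proof -
  have e1: "G (Suc (Suc m)) x y = (x+y) * G (Suc m) x y - x*y * G m x y" by (rule G_R1)
  have e2: "G (Suc (Suc (Suc m))) x y = (x+y) * G (Suc (Suc m)) x y - x*y * G (Suc m) x y" by (rule G_R1)
  have e3: "G (Suc (Suc (Suc (Suc m)))) x y = (x+y) * G (Suc (Suc (Suc m))) x y - x*y * G (Suc (Suc m)) x y" by (rule G_R1)
  show ?thesis using e1 e2 e3 by algebra
qed

lemma eval4_diff: "eval4 (p-q) a b \<alpha> \<beta> = eval4 p a b \<alpha> \<beta> - eval4 q a b \<alpha> \<beta>"
  using eval4_add[of p "-q"] eval4_uminus[of q] by simp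

lemma HH_one:
  assumes "\<And>a b \<alpha> \<beta> x y. (\<beta>*a-\<alpha>*b) * f x y = eval4 p a b \<alpha> \<beta> * (\<alpha>*x^2 + \<beta>*x*y + \<alpha>*y^2)
      + eval4 q a b \<alpha> \<beta> * (a*x^2 + b*x*y + a*y^2)"
  shows "HH 1 (\<lambda>a b \<alpha> \<beta> x y. (\<beta>*a-\<alpha>*b) * f x y)"
proof -
  have "HH (Suc 0) (\<lambda>a b \<alpha> \<beta> x y. (\<beta>*a-\<alpha>*b) * f x y)"
    by (rule HH_cong[OF HH_lin[OF HH_const[of 1], of p q]]) (simp add: assms)
  then show ?thesis by simp
qed

lemma HH_zero: assumes "\<And>x y. f x y = c" shows "HH 0 (\<lambda>a b \<alpha> \<beta> x y. f x y)"
  by (rule HH_cong[OF HH_const[of c]]) (simp add: assms)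

lemma plus_HH: "HH (n div 2) (\<lambda>a b \<alpha> \<beta> x y. (\<beta>*a-\<alpha>*b)^(n div 2) * plus_quot n x y)"
proof (cases "even n")
  case True
  then obtain k where n: "n = 2*k" by blast
  define e where "e k x y = x^(2*k) + y^(2*k)" for k and x y :: int
  have hk: "HH k (\<lambda>a b \<alpha> \<beta> x y. (\<beta>*a-\<alpha>*b)^k * e k x y)"
  proof (rule HH_seq)
    show "e (Suc (Suc k)) x y = (x^2+y^2) * e (Suc k) x y - (x*y)^2 * e k x y" for k x y
      unfolding e_def by (simp add: algebra_simps power_mult_distrib power_add power2_eq_square)
    show "HH 0 (\<lambda>a b \<alpha> \<beta> x y. e 0 x y)" by (rule HH_zero[of _ 2]) (simp add: e_def)
    show "HH 1 (\<lambda>a b \<alpha> \<beta> x y. (\<beta>*a-\<alpha>*b) * e 1 x y)"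
      by (rule HH_one[of _ "-[:[:0,1:]:]" "[:[:[:[:0,1:]:]:]:]"])
        (unfold eval4_uminus eval4_b eval4_be, simp add: e_def algebra_simps power2_eq_square)
  qed
  have kk: "n div 2 = k" using n by simp
  show ?thesis unfolding kk
    by (rule HH_cong[OF hk]) (simp add: n e_def plus_quot_def)
next
  case False
  then obtain k where n: "n = 2*k+1" using oddE by blast
  define f where "f k x y = G (2*k+1) x (-y)" for k and x y :: int
  have hk: "HH k (\<lambda>a b \<alpha> \<beta> x y. (\<beta>*a-\<alpha>*b)^k * f k x y)"
  proof (rule HH_seq)
    show "f (Suc (Suc k)) x y = (x^2+y^2) * f (Suc k) x y - (x*y)^2 * f k x y" for k x y
      unfolding f_def using G_R2[of "2*k+1" x "-y"] by (simp add: power_mult_distrib)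
    show "HH 0 (\<lambda>a b \<alpha> \<beta> x y. f 0 x y)" by (rule HH_zero[of _ 1]) (simp add: f_def G_def)
    show "HH 1 (\<lambda>a b \<alpha> \<beta> x y. (\<beta>*a-\<alpha>*b) * f 1 x y)"
      by (rule HH_one[of _ "-[:[:0,1:]:] - [:0,1:]" "[:[:[:[:0,1:]:]:]:] + [:[:[:0,1:]:]:]"])
        (unfold eval4_uminus eval4_b eval4_be eval4_a eval4_al eval4_add eval4_diff, simp add: f_def G_def
           numeral_3_eq_3 algebra_simps power2_eq_square)
  qed
  have kk: "n div 2 = k" using n by auto
  show ?thesis unfolding kk
  proof (rule HH_cong[OF hk])
    fix a b \<alpha> \<beta> x y :: int
    have "plus_quot n x y = f k x y"
      unfolding plus_quot_def f_def G_def using n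
      by (simp add: power_minus[of y] mult.assoc mult.left_commute)
    then show "(\<beta>*a-\<alpha>*b)^k * f k x y = (\<beta>*a-\<alpha>*b)^k * plus_quot n x y"
      using n by simp
  qed
qed

lemma minus_HH: assumes "n \<ge> 1"
  shows "HH ((n-1) div 2) (\<lambda>a b \<alpha> \<beta> x y. (\<beta>*a-\<alpha>*b)^((n-1) div 2) * minus_quot n x y)"
proof (cases "even n")
  case True
  then obtain k where n: "n = 2*Suc k" using assms
    by (metis One_nat_def dvd_imp_le evenE not0_implies_Suc mult_0_right not_one_le_zero)
  define g where "g k x y = G (Suc k) (x^2) (y^2)" for k and x y :: int
  have hk: "HH k (\<lambda>a b \<alpha> \<beta> x y. (\<beta>*a-\<alpha>*b)^k * g k x y)"
  proof (rule HH_seq)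
    show "g (Suc (Suc k)) x y = (x^2+y^2) * g (Suc k) x y - (x*y)^2 * g k x y" for k x y
      unfolding g_def using G_R1[of "Suc k" "x^2" "y^2"] by (simp add: power_mult_distrib)
    show "HH 0 (\<lambda>a b \<alpha> \<beta> x y. g 0 x y)" by (rule HH_zero[of _ 1]) (simp add: g_def G_def)
    show "HH 1 (\<lambda>a b \<alpha> \<beta> x y. (\<beta>*a-\<alpha>*b) * g 1 x y)"
      by (rule HH_one[of _ "-[:[:0,1:]:]" "[:[:[:[:0,1:]:]:]:]"])
        (unfold eval4_uminus eval4_b eval4_be, simp add: g_def G_def numeral_2_eq_2 algebra_simps power2_eq_square)
  qed
  have kk: "(n-1) div 2 = k" using n by auto
  show ?thesis unfolding kk
  proof (rule HH_cong[OF hk])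
    fix a b \<alpha> \<beta> x y :: int
    have "minus_quot n x y = (\<Sum>j<Suc k. x^(2*Suc k - 2 - 2*j) * y^(2*j))"
      using n True by (simp add: minus_quot_def)
    also have "\<dots> = g k x y"
      unfolding g_def G_def
    proof (intro sum.cong refl)
      fix j assume "j \<in> {..<Suc k}"
      have "2*Suc k - 2 - 2*j = 2*(Suc k - 1 - j)" by simp
      then show "x^(2*Suc k - 2 - 2*j) * y^(2*j) = (x^2)^(Suc k - 1 - j) * (y^2)^j"
        by (simp only: power_mult)
    qed
    finally have "minus_quot n x y = g k x y" .
    then show "(\<beta>*a-\<alpha>*b)^k * g k x y = (\<beta>*a-\<alpha>*b)^k * minus_quot n x y"
      using n by simp
  qed
next
  case False
  then obtain k where n: "n = 2*k+1" using oddE by blast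
  define h where "h k x y = G (2*k+1) x y" for k and x y :: int
  have hk: "HH k (\<lambda>a b \<alpha> \<beta> x y. (\<beta>*a-\<alpha>*b)^k * h k x y)"
  proof (rule HH_seq)
    show "h (Suc (Suc k)) x y = (x^2+y^2) * h (Suc k) x y - (x*y)^2 * h k x y" for k x y
      unfolding h_def using G_R2[of "2*k+1" x y] by simp
    show "HH 0 (\<lambda>a b \<alpha> \<beta> x y. h 0 x y)" by (rule HH_zero[of _ 1]) (simp add: h_def G_def)
    show "HH 1 (\<lambda>a b \<alpha> \<beta> x y. (\<beta>*a-\<alpha>*b) * h 1 x y)"
      by (rule HH_one[of _ "[:0,1:] - [:[:0,1:]:]" "[:[:[:[:0,1:]:]:]:] - [:[:[:0,1:]:]:]"])
        (unfold eval4_uminus eval4_b eval4_be eval4_a eval4_al eval4_add eval4_diff, simp add: h_def G_def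
           numeral_3_eq_3 algebra_simps power2_eq_square)
  qed
  have kk: "(n-1) div 2 = k" using n by auto
  show ?thesis unfolding kk
  proof (rule HH_cong[OF hk])
    fix a b \<alpha> \<beta> x y :: int
    have "minus_quot n x y = h k x y"
      unfolding minus_quot_def h_def G_def using n by simp
    then show "(\<beta>*a-\<alpha>*b)^k * h k x y = (\<beta>*a-\<alpha>*b)^k * minus_quot n x y"
      using n by simp
  qed
qed

theorem theorem3p1:
  fixes n :: nat
  assumes "n \<ge> 1"
  shows "\<exists>\<Psi> \<Phi> :: nat \<Rightarrow> int poly poly poly poly.
    \<forall>a b \<alpha> \<beta> x y :: int.
      (\<beta>*a - \<alpha>*b)^(n div 2) * plus_quot n x y =
        (\<Sum>r\<le>n div 2. eval4 (\<Psi> r) a b \<alpha> \<beta>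
            * (\<alpha>*x^2 + \<beta>*x*y + \<alpha>*y^2)^(n div 2 - r) * (a*x^2 + b*x*y + a*y^2)^r)
    \<and> (\<beta>*a - \<alpha>*b)^((n-1) div 2) * minus_quot n x y =
        (\<Sum>r\<le>(n-1) div 2. eval4 (\<Phi> r) a b \<alpha> \<beta>
            * (\<alpha>*x^2 + \<beta>*x*y + \<alpha>*y^2)^((n-1) div 2 - r) * (a*x^2 + b*x*y + a*y^2)^r)"
proof -
  obtain \<Psi> where P: "\<forall>a b \<alpha> \<beta> x y. (\<beta>*a - \<alpha>*b)^(n div 2) * plus_quot n x y =
        (\<Sum>r\<le>n div 2. eval4 (\<Psi> r) a b \<alpha> \<beta>
            * (\<alpha>*x^2 + \<beta>*x*y + \<alpha>*y^2)^(n div 2 - r) * (a*x^2 + b*x*y + a*y^2)^r)"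
    using plus_HH[of n] unfolding HH_def by blast
  obtain \<Phi> where Q: "\<forall>a b \<alpha> \<beta> x y. (\<beta>*a - \<alpha>*b)^((n-1) div 2) * minus_quot n x y =
        (\<Sum>r\<le>(n-1) div 2. eval4 (\<Phi> r) a b \<alpha> \<beta>
            * (\<alpha>*x^2 + \<beta>*x*y + \<alpha>*y^2)^((n-1) div 2 - r) * (a*x^2 + b*x*y + a*y^2)^r)"
    using minus_HH[OF assms] unfolding HH_def by blast
  show ?thesis using P Q by blast
qed

end
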